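(* Let $Y$ be a topological space such that the diagonal $\Delta Y=\{(y,y):y\in Y\}$ is statistically closed in $Y\times Y$, and let $X$ be an open subspace of $Y$ which is not statistically compact. Define $f:Y\to X^s$ by $f(x)=x$ if $x\in X$ and $f(x)=\infty^X$ otherwise. Then $f$ is statistically continuous, where $X^s$ carries the topology $\tau^X_s$.
   Context: For $A\subseteq\mathbb{N}$ let $d_n(A)=|A\cap\{1,\dots,n\}|/n$, $\overline{d}(A)=\limsup_n d_n(A)$, $\underline{d}(A)=\liminf_n d_n(A)$, and $d(A)$ their common value when equal. A sequence in $X$ is a map from an infinite subset $M\subseteq\mathbb{N}$ into $X$, written $(x_n)_{n\in M}$; a subsequence is $(x_n)_{n\in N}$ with $N\subseteq M$ infinite. It is nonthin if $\overline{d}(M)>0$. A nonthin sequence $(x_n)_{n\in M}$ is statistically convergent to $a\in X$ if for every open $U\ni a$, $d(\{n\in M:x_n\notin U\})=0$. The statistical closure $\overline{F}^{ST}$ of $F\subseteq X$ is the set of $x\in X$ such that some nonthin sequence in $F$ is statistically convergent to $x$; $F$ is statistically closed if $\overline{F}^{ST}=F$. A topological space is statistically compact if every nonthin sequence in it has a nonthin subsequence that is statistically convergent to some point of the space; a subset is statistically compact if it is so in the subspace topology. For $(X,\tau)$ not statistically compact, the one point statistical compactification is $X^s=X\cup\{\infty^X\}$ ($\infty^X\notin X$) with topology $\tau^X_s=\tau\cup\{X^s\setminus C: C$ closed and statistically compact subset of $X\}$. A function $f$ is statistically continuous if whenever a nonthin sequence $(x_n)_{n\in K}$ statistically converges to $x$,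 $(f(x_n))_{n\in K}$ statistically converges to $f(x)$. *)

theory Defs
  imports "HOL-Analysis.Analysis"
begin

definition dens_n :: "nat set \<Rightarrow> nat \<Rightarrow> real" where
  "dens_n A n = real (card (A \<inter> {1..n})) / real n"

definition upper_density :: "nat set \<Rightarrow> ereal" where
  "upper_density A = limsup (\<lambda>n. ereal (dens_n A n))"

definition density_zero :: "nat set \<Rightarrow> bool" where
  "density_zero A \<longleftrightarrow> (\<lambda>n. dens_n A n) \<longlonglongrightarrow> 0"

definition nonthin :: "nat set \<Rightarrow> bool" where
  "nonthin M \<longleftrightarrow> upper_density M > 0"

definition stat_conv :: "'a topology \<Rightarrow> nat set \<Rightarrow> (nat \<Rightarrow> 'a) \<Rightarrow> 'a \<Rightarrow> bool" where
  "stat_conv T M x a \<longleftrightarrow>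
     nonthin M \<and> (\<forall>n\<in>M. x n \<in> topspace T) \<and> a \<in> topspace T \<and>
     (\<forall>U. openin T U \<and> a \<in> U \<longrightarrow> density_zero {n \<in> M. x n \<notin> U})"

definition stat_closure :: "'a topology \<Rightarrow> 'a set \<Rightarrow> 'a set" where
  "stat_closure T F = {a \<in> topspace T. \<exists>M x. nonthin M \<and> (\<forall>n\<in>M. x n \<in> F) \<and> stat_conv T M x a}"

definition stat_closed :: "'a topology \<Rightarrow> 'a set \<Rightarrow> bool" where
  "stat_closed T F \<longleftrightarrow> stat_closure T F = F"

definition stat_compact :: "'a topology \<Rightarrow> bool" where
  "stat_compact T \<longleftrightarrow>
     (\<forall>M x. nonthin M \<and> (\<forall>n\<in>M. x n \<in> topspace T) \<longrightarrow>
        (\<exists>N. N \<subseteq> M \<and> nonthin N \<and> (\<exists>a. stat_conv T N x a)))"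

definition stat_continuous :: "'a topology \<Rightarrow> 'b topology \<Rightarrow> ('a \<Rightarrow> 'b) \<Rightarrow> bool" where
  "stat_continuous T S f \<longleftrightarrow>
     (\<forall>K x a. stat_conv T K x a \<longrightarrow> stat_conv S K (f \<circ> x) (f a))"

text \<open>One point statistical compactification X^s = X \<union> {\<infinity>}; points of X are
  represented as Some x and the point \<infinity>^X as None.\<close>
definition stat_compactification :: "'a topology \<Rightarrow> 'a option topology" where
  "stat_compactification X = topology (\<lambda>V.
     (\<exists>U. openin X U \<and> V = Some ` U) \<or>
     (\<exists>C. closedin X C \<and> stat_compact (subtopology X C) \<and>
          V = insert None (Some ` (topspace X - C))))"

end

theory Submission
  imports Defs
begin

lemma dens_nonneg: "0 \<le> dens_n A n" by (simp add: dens_n_def)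

lemma dens_mono: "A \<subseteq> B \<Longrightarrow> dens_n A n \<le> dens_n B n"
  unfolding dens_n_def
  by (intro divide_right_mono) (auto intro!: card_mono)

lemma dens_Un: "dens_n (A \<union> B) n \<le> dens_n A n + dens_n B n"
proof -
  have "card ((A \<union> B) \<inter> {1..n}) \<le> card (A \<inter> {1..n}) + card (B \<inter> {1..n})"
    by (metis Int_Un_distrib2 card_Un_le)
  then have "real (card ((A \<union> B) \<inter> {1..n})) \<le> real (card (A \<inter> {1..n})) + real (card (B \<inter> {1..n}))"
    by linarith
  then show ?thesis unfolding dens_n_def
    by (metis add_divide_distrib divide_right_mono of_nat_0_le_iff)
qed

lemma dz_subset: "density_zero B \<Longrightarrow> A \<subseteq> B \<Longrightarrow> density_zero A"
  unfolding density_zero_def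
  by (rule tendsto_sandwich[of "\<lambda>n. 0" _ _ "\<lambda>n. dens_n B n"]) (auto simp: dens_nonneg dens_mono)

lemma dz_Un: "density_zero A \<Longrightarrow> density_zero B \<Longrightarrow> density_zero (A \<union> B)"
  unfolding density_zero_def
  apply (rule tendsto_sandwich[of "\<lambda>n. 0" _ _ "\<lambda>n. dens_n A n + dens_n B n"])
  using dens_nonneg dens_Un tendsto_add[of "\<lambda>n. dens_n A n" 0 sequentially "\<lambda>n. dens_n B n" 0]
  by auto

lemma dz_empty: "density_zero {}"
  unfolding density_zero_def dens_n_def by simp

lemma nonthin_iff: "nonthin A \<longleftrightarrow> \<not> density_zero A"
proof
  assume nt: "nonthin A"
  show "\<not> density_zero A"
  proof
    assume "density_zero A"
    then have "((\<lambda>n. ereal (dens_n A n)) \<longlongrightarrow> ereal 0) sequentially"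
      unfolding density_zero_def by (simp add: lim_ereal)
    then have "upper_density A = ereal 0"
      unfolding upper_density_def by (rule lim_imp_Limsup[OF trivial_limit_sequentially])
    with nt show False unfolding nonthin_def by (simp add: zero_ereal_def)
  qed
next
  assume ndz: "\<not> density_zero A"
  show "nonthin A"
  proof (rule ccontr)
    assume "\<not> nonthin A"
    then have ls: "limsup (\<lambda>n. ereal (dens_n A n)) \<le> 0"
      unfolding nonthin_def upper_density_def by simp
    have li: "0 \<le> liminf (\<lambda>n. ereal (dens_n A n))"
      by (rule Liminf_bounded) (simp add: dens_nonneg)
    have "liminf (\<lambda>n. ereal (dens_n A n)) \<le> limsup (\<lambda>n. ereal (dens_n A n))"
      by (rule Liminf_le_Limsup) simp
    with ls li have "liminf (\<lambda>n. ereal (dens_n A n)) = ereal 0"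
      "limsup (\<lambda>n. ereal (dens_n A n)) = ereal 0" by (auto simp: zero_ereal_def)
    then have "((\<lambda>n. ereal (dens_n A n)) \<longlongrightarrow> ereal 0) sequentially"
      by (intro Liminf_eq_Limsup) auto
    with ndz show False unfolding density_zero_def by (simp add: lim_ereal)
  qed
qed

lemma sc_transfer:
  assumes "stat_conv (subtopology X A) N x a" "a \<in> B" "\<forall>n\<in>N. x n \<in> A \<inter> B"
  shows "stat_conv (subtopology X B) N x a"
  unfolding stat_conv_def
proof (intro conjI ballI allI impI)
  show "nonthin N" using assms(1) unfolding stat_conv_def by blast
  fix n assume "n \<in> N" then show "x n \<in> topspace (subtopology X B)"
    using assms unfolding stat_conv_def by auto
next
  show "a \<in> topspace (subtopology X B)" using assms unfolding stat_conv_def by auto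
next
  fix U assume U: "openin (subtopology X B) U \<and> a \<in> U"
  then obtain T where T: "openin X T" "U = T \<inter> B" by (auto simp: openin_subtopology)
  have "a \<in> A" using assms(1) unfolding stat_conv_def by auto
  then have "openin (subtopology X A) (T \<inter> A) \<and> a \<in> T \<inter> A"
    using T U by (auto simp: openin_subtopology)
  then have "density_zero {n \<in> N. x n \<notin> T \<inter> A}" using assms(1) unfolding stat_conv_def by blast
  then show "density_zero {n \<in> N. x n \<notin> U}"
    by (rule dz_subset) (use T assms(3) in auto)
qed

lemma sc_sub:
  assumes "stat_conv T K x a" "N \<subseteq> K" "nonthin N"
  shows "stat_conv T N x a"
  using assms unfolding stat_conv_def
  by (auto elim!: dz_subset)

lemma closed_sub_compact:
  assumes C: "stat_compact (subtopology X C)" and D: "closedin X D" "D \<subseteq> C"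
  shows "stat_compact (subtopology X D)"
  unfolding stat_compact_def
proof (intro allI impI)
  fix M x assume Mx: "nonthin M \<and> (\<forall>n\<in>M. x n \<in> topspace (subtopology X D))"
  then have "\<forall>n\<in>M. x n \<in> topspace (subtopology X C)" using D by auto
  with Mx C obtain N a where N: "N \<subseteq> M" "nonthin N" "stat_conv (subtopology X C) N x a"
    unfolding stat_compact_def by blast
  have aC: "a \<in> topspace X" "a \<in> C" using N(3) unfolding stat_conv_def by auto
  have aD: "a \<in> D"
  proof (rule ccontr)
    assume "a \<notin> D"
    have "openin X (topspace X - D)" using D(1) by (simp add: closedin_def)
    then have "openin (subtopology X C) ((topspace X - D) \<inter> C)"
      by (rule openin_subtopology_Int)
    moreover have "a \<in> (topspace X - D) \<inter> C" using aC \<open>a \<notin> D\<close> by auto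
    ultimately have "density_zero {n \<in> N. x n \<notin> (topspace X - D) \<inter> C}"
      using N(3) unfolding stat_conv_def by blast
    moreover have "{n \<in> N. x n \<notin> (topspace X - D) \<inter> C} = N" using N(1) Mx by auto
    ultimately show False using N(2) nonthin_iff by auto
  qed
  have "stat_conv (subtopology X D) N x a"
    by (rule sc_transfer[OF N(3) aD]) (use N(1) Mx D in auto)
  then show "\<exists>N. N \<subseteq> M \<and> nonthin N \<and> (\<exists>a. stat_conv (subtopology X D) N x a)"
    using N by blast
qed

lemma compact_Un:
  assumes C1: "stat_compact (subtopology X C1)" and C2: "stat_compact (subtopology X C2)"
  shows "stat_compact (subtopology X (C1 \<union> C2))"
  unfolding stat_compact_def
proof (intro allI impI)
  fix M x assume Mx: "nonthin M \<and> (\<forall>n\<in>M. x n \<in> topspace (subtopology X (C1 \<union> C2)))"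
  define M1 where "M1 = {n\<in>M. x n \<in> C1}"
  define M2 where "M2 = {n\<in>M. x n \<in> C2}"
  have "M = M1 \<union> M2" using Mx unfolding M1_def M2_def by auto
  then have "nonthin M1 \<or> nonthin M2" using Mx nonthin_iff dz_Un by metis
  then show "\<exists>N. N \<subseteq> M \<and> nonthin N \<and> (\<exists>a. stat_conv (subtopology X (C1 \<union> C2)) N x a)"
  proof
    assume "nonthin M1"
    moreover have "\<forall>n\<in>M1. x n \<in> topspace (subtopology X C1)" using Mx unfolding M1_def by auto
    ultimately obtain N a where N: "N \<subseteq> M1" "nonthin N" "stat_conv (subtopology X C1) N x a"
      using C1 unfolding stat_compact_def by blast
    have "a \<in> C1" using N(3) unfolding stat_conv_def by auto
    have "stat_conv (subtopology X (C1 \<union> C2)) N x a"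
      by (rule sc_transfer[OF N(3)]) (use N(1) \<open>a \<in> C1\<close> in \<open>auto simp: M1_def\<close>)
    then show ?thesis using N M1_def by blast
  next
    assume "nonthin M2"
    moreover have "\<forall>n\<in>M2. x n \<in> topspace (subtopology X C2)" using Mx unfolding M2_def by auto
    ultimately obtain N a where N: "N \<subseteq> M2" "nonthin N" "stat_conv (subtopology X C2) N x a"
      using C2 unfolding stat_compact_def by blast
    have "a \<in> C2" using N(3) unfolding stat_conv_def by auto
    have "stat_conv (subtopology X (C1 \<union> C2)) N x a"
      by (rule sc_transfer[OF N(3)]) (use N(1) \<open>a \<in> C2\<close> in \<open>auto simp: M2_def\<close>)
    then show ?thesis using N M2_def by blast
  qed
qed

lemma istop: "istopology (\<lambda>V. (\<exists>U. openin X U \<and> V = Some ` U) \<or>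
     (\<exists>C. closedin X C \<and> stat_compact (subtopology X C) \<and>
          V = insert None (Some ` (topspace X - C))))" (is "istopology ?P")
  unfolding istopology_def
proof (intro conjI allI impI)
  fix S T assume S: "?P S" and T: "?P T"
  show "?P (S \<inter> T)"
  proof (cases "\<exists>U. openin X U \<and> S = Some ` U")
    case True
    then obtain U1 where U1: "openin X U1" "S = Some ` U1" by blast
    show ?thesis
    proof (cases "\<exists>U. openin X U \<and> T = Some ` U")
      case True
      then obtain U2 where U2: "openin X U2" "T = Some ` U2" by blast
      have "S \<inter> T = Some ` (U1 \<inter> U2)" using U1 U2 by auto
      then show ?thesis using U1 U2 by blast
    next
      case False
      then obtain C where C: "closedin X C" "T = insert None (Some ` (topspace X - C))" using T False by metis
      have "S \<inter> T = Some ` (U1 \<inter> (topspace X - C))" using U1 C by auto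
      moreover have "openin X (U1 \<inter> (topspace X - C))" using U1 C by (auto simp: closedin_def)
      ultimately show ?thesis by blast
    qed
  next
    case False
    then obtain C1 where C1: "closedin X C1" "stat_compact (subtopology X C1)"
      "S = insert None (Some ` (topspace X - C1))" using S False by metis
    show ?thesis
    proof (cases "\<exists>U. openin X U \<and> T = Some ` U")
      case True
      then obtain U2 where U2: "openin X U2" "T = Some ` U2" by blast
      have "S \<inter> T = Some ` (U2 \<inter> (topspace X - C1))" using U2 C1 by auto
      moreover have "openin X (U2 \<inter> (topspace X - C1))" using U2 C1 by (auto simp: closedin_def)
      ultimately show ?thesis by blast
    next
      case False
      then obtain C2 where C2: "closedin X C2" "stat_compact (subtopology X C2)"
        "T = insert None (Some ` (topspace X - C2))" using T False by metis
      have "S \<inter> T = insert None (Some ` (topspace X - (C1 \<union> C2)))" using C1 C2 by auto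
      moreover have "closedin X (C1 \<union> C2)" using C1 C2 by auto
      moreover have "stat_compact (subtopology X (C1 \<union> C2))" using C1 C2 compact_Un by blast
      ultimately show ?thesis by blast
    qed
  qed
next
  fix K assume K: "\<forall>V\<in>K. ?P V"
  define \<U> where "\<U> = {U. openin X U \<and> Some ` U \<in> K}"
  show "?P (\<Union>K)"
  proof (cases "\<exists>V\<in>K. \<exists>C. closedin X C \<and> stat_compact (subtopology X C) \<and>
          V = insert None (Some ` (topspace X - C))")
    case False
    have KV: "\<And>V. V \<in> K \<Longrightarrow> \<exists>U. openin X U \<and> V = Some ` U" using K False by metis
    have "\<Union>K = Some ` (\<Union>\<U>)"
    proof
      show "\<Union>K \<subseteq> Some ` (\<Union>\<U>)"
      proof
        fix y assume "y \<in> \<Union>K"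
        then obtain V where V: "V \<in> K" "y \<in> V" by blast
        then obtain U where U: "openin X U" "V = Some ` U" using KV by blast
        then have "U \<in> \<U>" using V unfolding \<U>_def by simp
        then show "y \<in> Some ` (\<Union>\<U>)" using U V by blast
      qed
    next
      show "Some ` (\<Union>\<U>) \<subseteq> \<Union>K" unfolding \<U>_def by blast
    qed
    moreover have "openin X (\<Union>\<U>)" unfolding \<U>_def by auto
    ultimately show ?thesis by blast
  next
    case True
    then obtain V0 C0 where V0: "V0 \<in> K" "closedin X C0" "stat_compact (subtopology X C0)"
      "V0 = insert None (Some ` (topspace X - C0))" by blast
    define \<C> where "\<C> = {C. closedin X C \<and> stat_compact (subtopology X C) \<and>
          insert None (Some ` (topspace X - C)) \<in> K}"
    define D where "D = \<Inter>\<C> - \<Union>\<U>"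
    have C0: "C0 \<in> \<C>" using V0 unfolding \<C>_def by auto
    have "closedin X (\<Inter>\<C>)" using C0 unfolding \<C>_def by (intro closedin_Inter) auto
    moreover have "openin X (\<Union>\<U>)" unfolding \<U>_def by auto
    ultimately have Dc: "closedin X D" unfolding D_def by (rule closedin_diff)
    have "D \<subseteq> C0" using C0 unfolding D_def by auto
    then have Ds: "stat_compact (subtopology X D)" using closed_sub_compact V0 Dc by blast
    have "\<Union>K = insert None (Some ` (topspace X - D))"
    proof
      show "\<Union>K \<subseteq> insert None (Some ` (topspace X - D))"
      proof
        fix y assume "y \<in> \<Union>K"
        then obtain V where V: "V \<in> K" "y \<in> V" by blast
        show "y \<in> insert None (Some ` (topspace X - D))"
        proof (cases "\<exists>U. openin X U \<and> V = Some ` U")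
          case True
          then obtain U where U: "openin X U" "V = Some ` U" by blast
          then have "U \<in> \<U>" using V unfolding \<U>_def by auto
          with U V openin_subset[OF U(1)] show ?thesis unfolding D_def by auto
        next
          case False
          then obtain C where C: "closedin X C" "stat_compact (subtopology X C)"
            "V = insert None (Some ` (topspace X - C))" using K V False by metis
          then have "C \<in> \<C>" using V unfolding \<C>_def by auto
          with C V show ?thesis unfolding D_def by auto
        qed
      qed
    next
      show "insert None (Some ` (topspace X - D)) \<subseteq> \<Union>K"
      proof
        fix y assume y: "y \<in> insert None (Some ` (topspace X - D))"
        show "y \<in> \<Union>K"
        proof (cases "y = None")
          case True then show ?thesis using V0 by auto
        next
          case False
          then obtain u where u: "y = Some u" "u \<in> topspace X" "u \<notin> D" using y by auto
          show ?thesis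
          proof (cases "u \<in> \<Union>\<U>")
            case True then show ?thesis using u unfolding \<U>_def by auto
          next
            case False
            then obtain C where "C \<in> \<C>" "u \<notin> C" using u unfolding D_def by auto
            then have "insert None (Some ` (topspace X - C)) \<in> K" "Some u \<in> insert None (Some ` (topspace X - C))"
              using u unfolding \<C>_def by auto
            then show ?thesis using u by blast
          qed
        qed
      qed
    qed
    then show ?thesis using Dc Ds by blast
  qed
qed

lemma openin_sc: "openin (stat_compactification X) = (\<lambda>V. (\<exists>U. openin X U \<and> V = Some ` U) \<or>
     (\<exists>C. closedin X C \<and> stat_compact (subtopology X C) \<and>
          V = insert None (Some ` (topspace X - C))))"
  unfolding stat_compactification_def by (rule topology_inverse'[OF istop])

lemma top_sc: "openin (stat_compactification X) (insert None (Some ` topspace X))"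
proof -
  have "stat_compact (subtopology X {})"
    unfolding stat_compact_def
  proof (intro allI impI)
    fix M x assume Mx: "nonthin M \<and> (\<forall>n\<in>M. x n \<in> topspace (subtopology X {}))"
    then have "M = {}" by auto
    with Mx dz_empty nonthin_iff show "\<exists>N. N \<subseteq> M \<and> nonthin N \<and> (\<exists>a. stat_conv (subtopology X {}) N x a)"
      by auto
  qed
  then show ?thesis unfolding openin_sc
    by (intro disjI2 exI[of _ "{}"]) simp
qed

theorem mainTheorem19:
  fixes Y :: "'a topology" and X :: "'a set"
  assumes "stat_closed (prod_topology Y Y) {(y, y) | y. y \<in> topspace Y}"
    and "openin Y X"
    and "\<not> stat_compact (subtopology Y X)"
  shows "stat_continuous Y (stat_compactification (subtopology Y X))
           (\<lambda>y. if y \<in> X then Some y else None)"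
  unfolding stat_continuous_def
proof (intro allI impI)
  fix K x a assume sc: "stat_conv Y K x a"
  define f where "f = (\<lambda>y. if y \<in> X then Some y else None)"
  define Xs where "Xs = subtopology Y X"
  define T where "T = stat_compactification Xs"
  have XY: "X \<subseteq> topspace Y" using assms(2) by (rule openin_subset)
  have tsXs: "topspace Xs = X" unfolding Xs_def using XY by auto
  have top: "openin T (insert None (Some ` X))" unfolding T_def using top_sc[of Xs] tsXs by simp
  have inT: "f y \<in> topspace T" for y using openin_subset[OF top] unfolding f_def by auto
  have scK: "nonthin K" "\<forall>n\<in>K. x n \<in> topspace Y" "a \<in> topspace Y"
    "\<And>U. openin Y U \<Longrightarrow> a \<in> U \<Longrightarrow> density_zero {n \<in> K. x n \<notin> U}"
    using sc unfolding stat_conv_def by auto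
  have "stat_conv T K (f \<circ> x) (f a)"
    unfolding stat_conv_def
  proof (intro conjI ballI allI impI)
    show "nonthin K" by fact
    show "\<And>n. (f \<circ> x) n \<in> topspace T" using inT by simp
    show "f a \<in> topspace T" by (rule inT)
  next
    fix V assume V: "openin T V \<and> f a \<in> V"
    then have PV: "(\<exists>U. openin Xs U \<and> V = Some ` U) \<or>
     (\<exists>C. closedin Xs C \<and> stat_compact (subtopology Xs C) \<and>
          V = insert None (Some ` (topspace Xs - C)))"
      unfolding T_def openin_sc by simp
    show "density_zero {n \<in> K. (f \<circ> x) n \<notin> V}"
    proof (cases "a \<in> X")
      case True
      then have fa: "f a = Some a" unfolding f_def by simp
      show ?thesis
      proof (cases "\<exists>U. openin Xs U \<and> V = Some ` U")
        case True
        then obtain U where U: "openin Xs U" "V = Some ` U" by blast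
        have UY: "openin Y U" "U \<subseteq> X" using U(1) openin_open_subtopology[OF assms(2)]
          unfolding Xs_def by auto
        have "a \<in> U" using V fa U by auto
        then have "density_zero {n \<in> K. x n \<notin> U}" using scK(4) UY by blast
        then show ?thesis by (rule dz_subset) (use U UY in \<open>auto simp: f_def\<close>)
      next
        case False
        then obtain C where C: "closedin Xs C"
          "V = insert None (Some ` (X - C))" using PV tsXs by auto
        have "openin Xs (X - C)" using C(1) tsXs by (metis closedin_def)
        then have "openin Y (X - C)" using openin_open_subtopology[OF assms(2)]
          unfolding Xs_def by auto
        moreover have "a \<in> X - C" using V fa C by auto
        ultimately have "density_zero {n \<in> K. x n \<notin> X - C}" using scK(4) by blast
        then show ?thesis by (rule dz_subset) (use C in \<open>auto simp: f_def\<close>)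
      qed
    next
      case False
      then have fa: "f a = None" unfolding f_def by simp
      then obtain C where C: "closedin Xs C" "stat_compact (subtopology Xs C)"
          "V = insert None (Some ` (X - C))" using PV tsXs V by auto
      have CX: "C \<subseteq> X" using closedin_subset[OF C(1)] tsXs by simp
      define L where "L = {n \<in> K. x n \<in> C}"
      have "density_zero L"
      proof (rule ccontr)
        assume "\<not> density_zero L"
        then have ntL: "nonthin L" using nonthin_iff by blast
        have sub: "subtopology Xs C = subtopology Y C" unfolding Xs_def subtopology_subtopology
          using CX by (simp add: Int_absorb1)
        have "\<forall>n\<in>L. x n \<in> topspace (subtopology Xs C)" using scK(2) unfolding sub L_def by auto
        with ntL C(2) obtain N c where N: "N \<subseteq> L" "nonthin N" "stat_conv (subtopology Y C) N x c"
          unfolding stat_compact_def sub by blast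
        have cC: "c \<in> C" "c \<in> topspace Y" using N(3) unfolding stat_conv_def by auto
        have "stat_conv (subtopology Y (topspace Y)) N x c"
          by (rule sc_transfer[OF N(3)]) (use N(1) cC scK(2) in \<open>auto simp: L_def\<close>)
        then have scc: "stat_conv Y N x c" by simp
        have sca: "stat_conv Y N x a" using sc_sub[OF sc _ N(2)] N(1) unfolding L_def by auto
        have prod: "stat_conv (prod_topology Y Y) N (\<lambda>n. (x n, x n)) (c, a)"
          unfolding stat_conv_def
        proof (intro conjI ballI allI impI)
          show "nonthin N" by fact
          show "\<And>n. n \<in> N \<Longrightarrow> (x n, x n) \<in> topspace (prod_topology Y Y)"
            using scc unfolding stat_conv_def by auto
          show "(c, a) \<in> topspace (prod_topology Y Y)" using cC scK(3) by auto
        next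
          fix W assume W: "openin (prod_topology Y Y) W \<and> (c, a) \<in> W"
          then obtain U1 U2 where U: "openin Y U1" "openin Y U2" "c \<in> U1" "a \<in> U2" "U1 \<times> U2 \<subseteq> W"
            unfolding openin_prod_topology_alt by blast
          have "density_zero {n \<in> N. x n \<notin> U1}" using scc U unfolding stat_conv_def by blast
          moreover have "density_zero {n \<in> N. x n \<notin> U2}" using sca U unfolding stat_conv_def by blast
          ultimately have "density_zero ({n \<in> N. x n \<notin> U1} \<union> {n \<in> N. x n \<notin> U2})" by (rule dz_Un)
          then show "density_zero {n \<in> N. (x n, x n) \<notin> W}" by (rule dz_subset) (use U in auto)
        qed
        have "(c, a) \<in> stat_closure (prod_topology Y Y) {(y, y) | y. y \<in> topspace Y}"
          unfolding stat_closure_def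
          using prod N(2) cC scK(2,3) N(1) unfolding L_def by fastforce
        then have "c = a" using assms(1) unfolding stat_closed_def by auto
        then show False using cC CX False by auto
      qed
      then show ?thesis by (rule dz_subset) (use C in \<open>auto simp: f_def L_def\<close>)
    qed
  qed
  then show "stat_conv (stat_compactification (subtopology Y X)) K
          ((\<lambda>y. if y \<in> X then Some y else None) \<circ> x) ((\<lambda>y. if y \<in> X then Some y else None) a)"
    unfolding T_def Xs_def f_def .
qed

end
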